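(* Let $d\ge 2$ and let $X\in\mathbb{R}^d$ be a random vector with $\mathbb{E}\|X\|<\infty$. Then $X$ is spherically symmetric if and only if for every $c\in\mathbb{R}$ and all $u,v\in\mathcal{S}_{d-1}$, $$\mathbb{E}\big[(v-(v^\top u)u)^\top X\,\mathbf{1}_{\{u^\top X\ge c\}}\big]=0 .$$
   Context: $\mathcal{S}_{d-1}=\{x\in\mathbb{R}^d:\|x\|=1\}$ is the unit sphere (Euclidean norm). A random vector $X\in\mathbb{R}^d$ is spherically symmetric if $\Gamma X$ has the same distribution as $X$ for every orthogonal $d\times d$ matrix $\Gamma$ (i.e. $\Gamma^{-1}=\Gamma^\top$). *)

theory Defs
  imports "HOL-Probability.Probability"
begin

definition spherically_symmetric :: "'a measure \<Rightarrow> ('a \<Rightarrow> real^'d) \<Rightarrow> bool" where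
  "spherically_symmetric M X \<longleftrightarrow>
     (\<forall>\<Gamma>::real^'d^'d. orthogonal_matrix \<Gamma> \<longrightarrow>
        distr M borel (\<lambda>\<omega>. \<Gamma> *v X \<omega>) = distr M borel X)"

end

theory Submission
  imports Defs
begin

inductive_set Trig :: "(real^'d \<Rightarrow> real) set" where
  base: "(\<lambda>x. cos (t \<bullet> x + b)) \<in> Trig"
| scale: "f \<in> Trig \<Longrightarrow> (\<lambda>x. c * f x) \<in> Trig"
| add: "f \<in> Trig \<Longrightarrow> g \<in> Trig \<Longrightarrow> (\<lambda>x. f x + g x) \<in> Trig"

lemma Trig_const: "(\<lambda>_. c) \<in> Trig"
proof -
  have "(\<lambda>x::real^'d. c * cos (0 \<bullet> x + 0)) \<in> Trig" by (intro Trig.scale Trig.base)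
  then show ?thesis by simp
qed

lemma Trig_mult_base:
  fixes g :: "real^'d \<Rightarrow> real"
  assumes "g \<in> Trig" shows "(\<lambda>x. cos (t \<bullet> x + b) * g x) \<in> Trig"
  using assms
proof induction
  case (base s a)
  have "(\<lambda>x::real^'d. (1/2) * cos ((t+s) \<bullet> x + (b+a)) + (1/2) * cos ((t-s) \<bullet> x + (b-a))) \<in> Trig"
    by (intro Trig.add Trig.scale Trig.base)
  moreover have "(\<lambda>x::real^'d. (1/2) * cos ((t+s) \<bullet> x + (b+a)) + (1/2) * cos ((t-s) \<bullet> x + (b-a)))
     = (\<lambda>x. cos (t \<bullet> x + b) * cos (s \<bullet> x + a))"
  proof (rule ext)
    fix x :: "real^'d"
    have e1: "(t+s) \<bullet> x + (b+a) = (t \<bullet> x + b) + (s \<bullet> x + a)" by (simp add: inner_add_left)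
    have e2: "(t-s) \<bullet> x + (b-a) = (t \<bullet> x + b) - (s \<bullet> x + a)" by (simp add: inner_diff_left)
    show "(1/2) * cos ((t+s) \<bullet> x + (b+a)) + (1/2) * cos ((t-s) \<bullet> x + (b-a))
       = cos (t \<bullet> x + b) * cos (s \<bullet> x + a)"
      unfolding e1 e2 cos_times_cos by simp
  qed
  ultimately show ?case by simp
next
  case (scale f c)
  from Trig.scale[OF scale.IH, of c] show ?case by (simp add: algebra_simps)
next
  case (add f g)
  from Trig.add[OF add.IH] show ?case by (simp add: algebra_simps)
qed

lemma Trig_mult:
  assumes "f \<in> Trig" "g \<in> Trig" shows "(\<lambda>x. f x * g x) \<in> Trig"
  using assms(1)
proof induction
  case (base t b) show ?case using Trig_mult_base[OF assms(2)] .
next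
  case (scale f c)
  from Trig.scale[OF scale.IH, of c] show ?case by (simp add: algebra_simps)
next
  case (add f h)
  from Trig.add[OF add.IH] show ?case by (simp add: algebra_simps)
qed

lemma Trig_props:
  fixes f :: "real^'d \<Rightarrow> real"
  assumes "f \<in> Trig"
  shows "continuous_on UNIV f \<and> (\<exists>B. \<forall>x. \<bar>f x\<bar> \<le> B)"
  using assms
proof induction
  case (base t b)
  have "continuous_on UNIV (\<lambda>x::real^'d. cos (t \<bullet> x + b))"
    by (intro continuous_intros)
  then show ?case by (auto intro!: exI[of _ 1])
next
  case (scale f c)
  then obtain B where B: "\<forall>x. \<bar>f x\<bar> \<le> B" by auto
  have "\<forall>x. \<bar>c * f x\<bar> \<le> \<bar>c\<bar> * B"
    using B by (simp add: abs_mult mult_left_mono)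
  with scale show ?case by (auto intro!: continuous_intros)
next
  case (add f g)
  then obtain B C where "\<forall>x. \<bar>f x\<bar> \<le> B" "\<forall>x. \<bar>g x\<bar> \<le> C" by auto
  then have "\<forall>x. \<bar>f x + g x\<bar> \<le> B + C" by (metis abs_triangle_ineq add_mono order_trans)
  with add show ?case by (auto intro!: continuous_intros)
qed

lemma Trig_integral_eq:
  fixes \<mu> \<nu> :: "(real^'d) measure"
  assumes "finite_measure \<mu>" "finite_measure \<nu>" "sets \<mu> = sets borel" "sets \<nu> = sets borel"
    and eq: "\<And>t b. (\<integral>x. cos (t \<bullet> x + b) \<partial>\<mu>) = (\<integral>x. cos (t \<bullet> x + b) \<partial>\<nu>)"
    and "f \<in> Trig"
  shows "integrable \<mu> f \<and> integrable \<nu> f \<and> (\<integral>x. f x \<partial>\<mu>) = (\<integral>x. f x \<partial>\<nu>)"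
proof -
  have meas: "g \<in> borel_measurable \<mu> \<and> g \<in> borel_measurable \<nu>" if "continuous_on UNIV g" for g :: "real^'d \<Rightarrow> real"
    using borel_measurable_continuous_onI[OF that] assms(3,4)
    by (simp add: measurable_def)
  have int: "integrable \<mu> g \<and> integrable \<nu> g" if "g \<in> Trig" for g
  proof -
    from Trig_props[OF that] obtain B where "continuous_on UNIV g" "\<forall>x. \<bar>g x\<bar> \<le> B" by auto
    then show ?thesis using meas
      finite_measure.integrable_const_bound[OF assms(1), of g B]
      finite_measure.integrable_const_bound[OF assms(2), of g B] by auto
  qed
  show ?thesis using assms(6)
  proof induction
    case (base t b) then show ?case using int[OF Trig.base] eq by auto
  next
    case (scale f c) then show ?case by auto
  next
    case (add f g) then show ?case by auto
  qed
qed

definition cubeS :: "real \<Rightarrow> (real^'d) set" where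
  "cubeS L = {x. \<forall>j. \<bar>x $ j\<bar> \<le> L}"

lemma cubeS_cbox: "cubeS L = cbox (- (\<chi> j. L)) (\<chi> j. L)"
  unfolding cubeS_def by (auto simp: mem_box_cart abs_le_iff) (smt (verit))+

lemma compact_cubeS: "compact (cubeS L)"
  unfolding cubeS_cbox by simp

lemma closed_cubeS: "closed (cubeS L)"
  using compact_cubeS compact_imp_closed by blast

definition foldre :: "real \<Rightarrow> real \<Rightarrow> real" where
  "foldre L s = (2*L/pi) * arccos (cos (pi*(s+L)/(2*L))) - L"

definition foldv :: "real \<Rightarrow> real^'d \<Rightarrow> real^'d" where
  "foldv L x = (\<chi> j. foldre L (x $ j))"

lemma foldre_in: assumes "L > 0" shows "\<bar>foldre L s\<bar> \<le> L"
proof -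
  have "0 \<le> arccos (cos (pi*(s+L)/(2*L)))" "arccos (cos (pi*(s+L)/(2*L))) \<le> pi"
    by (auto intro: arccos_lbound arccos_ubound)
  then have "0 \<le> (2*L/pi) * arccos (cos (pi*(s+L)/(2*L)))"
     "(2*L/pi) * arccos (cos (pi*(s+L)/(2*L))) \<le> (2*L/pi) * pi"
    using assms by (simp, intro mult_left_mono, auto)
  moreover have "(2*L/pi) * pi = 2*L" by simp
  ultimately show ?thesis using assms unfolding foldre_def by (simp only: abs_le_iff) linarith
qed

lemma foldv_in: "L > 0 \<Longrightarrow> foldv L x \<in> cubeS L"
  unfolding cubeS_def foldv_def using foldre_in by auto

lemma cos_foldre: assumes "L > 0"
  shows "cos (pi*(foldre L s + L)/(2*L)) = cos (pi*(s+L)/(2*L))"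
proof -
  have "pi*(foldre L s + L)/(2*L) = arccos (cos (pi*(s+L)/(2*L)))"
    using assms unfolding foldre_def by (simp add: field_simps)
  then show ?thesis by (simp add: cos_arccos_abs)
qed

lemma angle_bounds: assumes L: "L > 0" and s: "\<bar>s\<bar> \<le> L"
  shows "0 \<le> pi*(s+L)/(2*L) \<and> pi*(s+L)/(2*L) \<le> pi"
proof -
  have a: "0 \<le> s+L" "s + L \<le> 2*L" using s by auto
  have "pi*(s+L) \<le> pi*(2*L)" using a by (intro mult_left_mono) auto
  then have "pi*(s+L)/(2*L) \<le> pi*(2*L)/(2*L)" using L by (intro divide_right_mono) auto
  then show ?thesis using L a by auto
qed

definition gen :: "real \<Rightarrow> 'd \<Rightarrow> real^'d \<Rightarrow> real" where
  "gen L j x = cos (pi*(x $ j + L)/(2*L))"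

lemma gen_Trig: fixes j :: "'d::finite" assumes "L > 0" shows "gen L j \<in> Trig"
proof -
  have "(\<lambda>x::real^'d. cos (((pi/(2*L)) *\<^sub>R axis j 1) \<bullet> x + pi/2)) \<in> Trig" by (rule Trig.base)
  moreover have "(\<lambda>x::real^'d. cos (((pi/(2*L)) *\<^sub>R axis j 1) \<bullet> x + pi/2)) = gen L j"
    using assms by (auto simp: gen_def inner_axis' field_simps intro!: ext)
  ultimately show ?thesis by simp
qed

lemma gen_fold: "L > 0 \<Longrightarrow> gen L j (foldv L x) = gen L j x"
  unfolding gen_def foldv_def using cos_foldre by simp

lemma SW_approx:
  fixes f :: "real^'d \<Rightarrow> real"
  assumes L: "L > 0" and f: "continuous_on UNIV f" and e: "e > 0"
  shows "\<exists>p\<in>Trig. (\<forall>x\<in>cubeS L. \<bar>f x - p x\<bar> < e) \<and> (\<forall>x. p x = p (foldv L x))"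
proof -
  define R where "R = {p :: real^'d \<Rightarrow> real. p \<in> Trig \<and> (\<forall>x. p x = p (foldv L x))}"
  interpret function_ring_on R "cubeS L"
  proof unfold_locales
    show "compact (cubeS L)" by (rule compact_cubeS)
  next
    fix f assume "f \<in> R" then show "continuous_on (cubeS L) f"
      unfolding R_def using Trig_props continuous_on_subset by blast
  next
    fix f g assume "f \<in> R" "g \<in> R" then show "(\<lambda>x. f x + g x) \<in> R"
      unfolding R_def by (auto intro: Trig.add)
  next
    fix f g assume "f \<in> R" "g \<in> R" then show "(\<lambda>x. f x * g x) \<in> R"
      unfolding R_def using Trig_mult by auto
  next
    fix c show "(\<lambda>_. c) \<in> R" unfolding R_def using Trig_const by auto
  next
    fix x y :: "real^'d" assume xy: "x \<in> cubeS L" "y \<in> cubeS L" "x \<noteq> y"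
    then obtain j where j: "x $ j \<noteq> y $ j" by (auto simp: vec_eq_iff)
    have "gen L j \<in> R" unfolding R_def using gen_Trig[OF L, of j] gen_fold[OF L, of j] by simp
    moreover have "gen L j x \<noteq> gen L j y"
    proof
      assume "gen L j x = gen L j y"
      then have "cos (pi*(x $ j + L)/(2*L)) = cos (pi*(y $ j + L)/(2*L))" by (simp add: gen_def)
      moreover have "0 \<le> pi*(x $ j + L)/(2*L)" "pi*(x $ j + L)/(2*L) \<le> pi"
        "0 \<le> pi*(y $ j + L)/(2*L)" "pi*(y $ j + L)/(2*L) \<le> pi"
        using xy(1,2) angle_bounds[OF L, of "x$j"] angle_bounds[OF L, of "y$j"] unfolding cubeS_def by auto
      ultimately have "pi*(x $ j + L)/(2*L) = pi*(y $ j + L)/(2*L)" by (rule cos_inj_pi[rotated 4])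
      with L j show False by (simp add: field_simps)
    qed
    ultimately show "\<exists>f\<in>R. f x \<noteq> f y" by blast
  qed
  from Stone_Weierstrass_basic[OF continuous_on_subset[OF f] e] obtain p where
    "p \<in> R" "\<forall>x\<in>cubeS L. \<bar>f x - p x\<bar> < e" by blast
  then show ?thesis unfolding R_def by auto
qed

lemma cubeS_mono: "L \<le> L' \<Longrightarrow> cubeS L \<subseteq> cubeS L'"
  unfolding cubeS_def by (auto intro: order_trans)

lemma cubeS_Union: "(\<Union>n. cubeS (real n) :: (real^'d) set) = UNIV"
proof -
  have "x \<in> cubeS (real (nat \<lceil>Max (range (\<lambda>j. \<bar>x $ j\<bar>))\<rceil>))" for x :: "real^'d"
  proof -
    have "\<bar>x $ j\<bar> \<le> Max (range (\<lambda>j. \<bar>x $ j\<bar>))" for j by (rule Max_ge) auto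
    then show ?thesis unfolding cubeS_def
      using order_trans[OF _ real_nat_ceiling_ge] by blast
  qed
  then show ?thesis by blast
qed

lemma tight:
  fixes \<mu> :: "(real^'d) measure"
  assumes "prob_space \<mu>" "sets \<mu> = sets borel" "e > 0"
  shows "\<exists>N. \<forall>n\<ge>N. measure \<mu> (cubeS (real n)) \<ge> 1 - e"
proof -
  interpret prob_space \<mu> by fact
  have "range (\<lambda>n. cubeS (real n)) \<subseteq> sets \<mu>" using assms(2) closed_cubeS by (auto intro: borel_closed)
  moreover have "incseq (\<lambda>n. cubeS (real n) :: (real^'d) set)"
    by (auto simp: incseq_def intro!: cubeS_mono)
  ultimately have "(\<lambda>n. measure \<mu> (cubeS (real n))) \<longlonglongrightarrow> measure \<mu> (\<Union>n. cubeS (real n))"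
    by (rule finite_Lim_measure_incseq)
  moreover have "space \<mu> = UNIV" using sets_eq_imp_space_eq[OF assms(2)] by simp
  then have "measure \<mu> (\<Union>n. cubeS (real n) :: (real^'d) set) = 1"
    using cubeS_Union[where 'd='d] prob_space by simp
  ultimately have "(\<lambda>n. measure \<mu> (cubeS (real n))) \<longlonglongrightarrow> 1" by simp
  from LIMSEQ_D[OF this assms(3)] show ?thesis by (force simp: abs_if split: if_splits)
qed

lemma bc_integral_eq:
  fixes \<mu> \<nu> :: "(real^'d) measure" and f :: "real^'d \<Rightarrow> real"
  assumes P: "prob_space \<mu>" "prob_space \<nu>" and S: "sets \<mu> = sets borel" "sets \<nu> = sets borel"
    and eq: "\<And>t b. (\<integral>x. cos (t \<bullet> x + b) \<partial>\<mu>) = (\<integral>x. cos (t \<bullet> x + b) \<partial>\<nu>)"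
    and f: "continuous_on UNIV f" and B: "\<And>x. \<bar>f x\<bar> \<le> B"
  shows "(\<integral>x. f x \<partial>\<mu>) = (\<integral>x. f x \<partial>\<nu>)"
proof -
  have fm: "f \<in> borel_measurable borel" using f by (rule borel_measurable_continuous_onI)
  have key: "\<bar>(\<integral>x. f x \<partial>\<mu>) - (\<integral>x. f x \<partial>\<nu>)\<bar> \<le> 2 * e * (2*B + 2)" if e: "0 < e" "e \<le> 1" for e
  proof -
    obtain N1 where N1: "\<forall>n\<ge>N1. measure \<mu> (cubeS (real n)) \<ge> 1 - e" using tight[OF P(1) S(1) e(1)] by blast
    obtain N2 where N2: "\<forall>n\<ge>N2. measure \<nu> (cubeS (real n)) \<ge> 1 - e" using tight[OF P(2) S(2) e(1)] by blast
    define L where "L = real (Suc (max N1 N2))"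
    have L: "L > 0" by (simp add: L_def)
    have mL: "measure \<mu> (cubeS L) \<ge> 1 - e" "measure \<nu> (cubeS L) \<ge> 1 - e"
    proof -
      have "N1 \<le> Suc (max N1 N2)" "N2 \<le> Suc (max N1 N2)" by auto
      then show "measure \<mu> (cubeS L) \<ge> 1 - e" "measure \<nu> (cubeS L) \<ge> 1 - e"
        using N1 N2 unfolding L_def by blast+
    qed
    obtain p where p: "p \<in> Trig" "\<forall>x\<in>cubeS L. \<bar>f x - p x\<bar> < e" "\<forall>x. p x = p (foldv L x)"
      using SW_approx[OF L f e(1)] by blast
    have pb: "\<bar>p x\<bar> \<le> B + e" for x
    proof -
      have "foldv L x \<in> cubeS L" using foldv_in[OF L] .
      then have "\<bar>f (foldv L x) - p (foldv L x)\<bar> < e" using p(2) by blast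
      moreover have "p x = p (foldv L x)" using p(3) by blast
      ultimately show ?thesis using B[of "foldv L x"] by (simp add: abs_le_iff abs_less_iff)
    qed
    have pw: "\<bar>f x - p x\<bar> \<le> e + (2*B+1) * indicator (- cubeS L) x" for x
    proof (cases "x \<in> cubeS L")
      case True then show ?thesis using p(2) by (auto intro: less_imp_le)
    next
      case False
      have "\<bar>f x - p x\<bar> \<le> B + (B + e)" using B[of x] pb[of x] by (simp add: abs_le_iff)
      then show ?thesis using False by simp
    qed
    have one: "\<bar>(\<integral>x. f x \<partial>M) - (\<integral>x. p x \<partial>M)\<bar> \<le> e * (2*B+2)"
      if PM: "prob_space M" and SM: "sets M = sets borel" and mM: "measure M (cubeS L) \<ge> 1 - e"
        and pM: "integrable M p" for M
    proof -
      interpret prob_space M by fact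
      have fM: "f \<in> borel_measurable M" using fm SM by (simp add: measurable_def)
      have intf: "integrable M f" using integrable_const_bound[of f B] B fM by auto
      have cS: "cubeS L \<in> sets M" using SM closed_cubeS by (auto intro: borel_closed)
      have cC: "- cubeS L \<in> sets M" using SM closed_cubeS by (auto intro!: borel_open)
      have intI: "integrable M (\<lambda>x. e + (2*B+1) * indicator (- cubeS L) x)"
        using cC by (intro Bochner_Integration.integrable_add integrable_mult_right)
          (auto intro!: integrable_real_indicator simp: emeasure_eq_measure)
      have "\<bar>(\<integral>x. f x \<partial>M) - (\<integral>x. p x \<partial>M)\<bar> = \<bar>\<integral>x. f x - p x \<partial>M\<bar>"
        using intf pM by simp
      also have "\<dots> \<le> (\<integral>x. \<bar>f x - p x\<bar> \<partial>M)" by (rule integral_abs_bound)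
      also have "\<dots> \<le> (\<integral>x. e + (2*B+1) * indicator (- cubeS L) x \<partial>M)"
        using intf pM intI pw by (intro integral_mono) auto
      also have "\<dots> = e + (2*B+1) * measure M (- cubeS L)"
      proof -
        have iI: "integrable M (indicat_real (- cubeS L))"
          using cC by (auto intro!: integrable_real_indicator simp: emeasure_eq_measure)
        have "(\<integral>x. e + (2*B+1) * indicator (- cubeS L) x \<partial>M) = (\<integral>x. e \<partial>M) + (\<integral>x. (2*B+1) * indicator (- cubeS L) x \<partial>M)"
          using iI by (intro Bochner_Integration.integral_add) auto
        also have "\<dots> = e + (2*B+1) * measure M (- cubeS L)"
          using cC by (simp add: prob_space Int_absorb2 sets.sets_into_space)
        finally show ?thesis .
      qed
      also have "measure M (- cubeS L) = 1 - measure M (cubeS L)"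
      proof -
        have "space M = UNIV" using sets_eq_imp_space_eq[OF SM] by simp
        then show ?thesis using prob_compl[OF cS] by (simp add: Compl_eq_Diff_UNIV)
      qed
      also have "e + (2*B+1) * (1 - measure M (cubeS L)) \<le> e + (2*B+1) * e"
      proof -
        have "0 \<le> 2*B+1" using B[of 0] by linarith
        then show ?thesis using mM by (intro add_left_mono mult_left_mono) auto
      qed
      also have "\<dots> = e * (2*B+2)" by (simp add: algebra_simps)
      finally show ?thesis .
    qed
    have peq: "integrable \<mu> p \<and> integrable \<nu> p \<and> (\<integral>x. p x \<partial>\<mu>) = (\<integral>x. p x \<partial>\<nu>)"
      using Trig_integral_eq[OF prob_space.finite_measure[OF P(1)] prob_space.finite_measure[OF P(2)] S eq p(1)] .
    have "\<bar>(\<integral>x. f x \<partial>\<mu>) - (\<integral>x. p x \<partial>\<mu>)\<bar> \<le> e * (2*B+2)" using one[OF P(1) S(1) mL(1)] peq by auto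
    moreover have "\<bar>(\<integral>x. f x \<partial>\<nu>) - (\<integral>x. p x \<partial>\<nu>)\<bar> \<le> e * (2*B+2)" using one[OF P(2) S(2) mL(2)] peq by auto
    ultimately show ?thesis using peq by (simp add: abs_le_iff)
  qed
  have "\<bar>(\<integral>x. f x \<partial>\<mu>) - (\<integral>x. f x \<partial>\<nu>)\<bar> \<le> 0"
  proof (rule field_le_epsilon)
    fix d :: real assume d: "0 < d"
    have B0: "0 \<le> B" using B[of 0] by linarith
    define e where "e = min 1 (d / (4*B+4))"
    have e: "0 < e" "e \<le> 1" using d B0 by (auto simp: e_def)
    have "2 * e * (2*B+2) \<le> 2 * (d / (4*B+4)) * (2*B+2)"
      using B0 by (intro mult_right_mono mult_left_mono) (auto simp: e_def)
    also have "\<dots> = d" using B0 by (simp add: field_simps)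
    finally show "\<bar>(\<integral>x. f x \<partial>\<mu>) - (\<integral>x. f x \<partial>\<nu>)\<bar> \<le> 0 + d" using key[OF e] by simp
  qed
  then show ?thesis by simp
qed

lemma measure_eq_trig:
  fixes \<mu> \<nu> :: "(real^'d) measure"
  assumes P: "prob_space \<mu>" "prob_space \<nu>" and S: "sets \<mu> = sets borel" "sets \<nu> = sets borel"
    and eq: "\<And>t b. (\<integral>x. cos (t \<bullet> x + b) \<partial>\<mu>) = (\<integral>x. cos (t \<bullet> x + b) \<partial>\<nu>)"
  shows "\<mu> = \<nu>"
proof -
  have spmu: "space \<mu> = UNIV" using sets_eq_imp_space_eq[OF S(1)] by simp
  have spnu: "space \<nu> = UNIV" using sets_eq_imp_space_eq[OF S(2)] by simp
  have openeq: "emeasure \<mu> U = emeasure \<nu> U" if U: "open U" for U :: "(real^'d) set"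
  proof (cases "U = UNIV")
    case True
    then show ?thesis using prob_space.emeasure_space_1[OF P(1)] prob_space.emeasure_space_1[OF P(2)] spmu spnu by simp
  next
    case False
    define C where "C = - U"
    have C: "closed C" "C \<noteq> {}" using U False by (auto simp: C_def)
    define f where "f n x = min 1 (real n * infdist x C)" for n :: nat and x :: "real^'d"
    have fc: "continuous_on UNIV (f n)" for n
      unfolding f_def by (intro continuous_intros continuous_on_infdist continuous_on_id)
    have fb: "\<bar>f n x\<bar> \<le> 1" for n x
      unfolding f_def using infdist_nonneg[of x C] by auto
    have fl: "(\<lambda>n. f n x) \<longlonglongrightarrow> indicator U x" for x
    proof (cases "x \<in> U")
      case True
      then have d: "infdist x C > 0" using C infdist_pos_not_in_closed by (auto simp: C_def)
      obtain N :: nat where N: "1 / infdist x C < real N" using reals_Archimedean2 by blast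
      have "\<forall>n\<ge>N. f n x = 1"
      proof (intro allI impI)
        fix n assume "N \<le> n"
        then have "real N \<le> real n" by simp
        then have "1 / infdist x C < real n" using N by linarith
        then have "1 \<le> real n * infdist x C" using d by (simp add: field_simps)
        then show "f n x = 1" by (simp add: f_def)
      qed
      then have "(\<lambda>n. f n x) \<longlonglongrightarrow> 1" by (intro tendsto_eventually) (auto simp: eventually_sequentially)
      then show ?thesis using True by simp
    next
      case False
      then have "infdist x C = 0" by (simp add: C_def infdist_zero)
      then show ?thesis using False by (simp add: f_def)
    qed
    have lim: "(\<lambda>n. \<integral>x. f n x \<partial>M) \<longlonglongrightarrow> measure M U"
      if PM: "prob_space M" and SM: "sets M = sets borel" for M
    proof -
      interpret prob_space M by fact
      have spM: "space M = UNIV" using sets_eq_imp_space_eq[OF SM] by simp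
      have fm: "f n \<in> borel_measurable M" for n
        using borel_measurable_continuous_onI[OF fc[of n]] SM by (simp add: measurable_def)
      have Um: "indicat_real U \<in> borel_measurable M"
      proof -
        have "U \<in> sets M" using SM borel_open[OF U] by simp
        then show ?thesis by (rule borel_measurable_indicator)
      qed
      have "(\<lambda>n. \<integral>x. f n x \<partial>M) \<longlonglongrightarrow> (\<integral>x. indicator U x \<partial>M)"
      proof (rule integral_dominated_convergence[where w="\<lambda>_. 1"])
        show "indicat_real U \<in> borel_measurable M" by (rule Um)
        show "\<And>i. f i \<in> borel_measurable M" by (rule fm)
        show "integrable M (\<lambda>_. 1::real)" by simp
        show "AE x in M. (\<lambda>i. f i x) \<longlonglongrightarrow> indicat_real U x" using fl by simp
        show "\<And>i. AE x in M. norm (f i x) \<le> 1" using fb by simp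
      qed
      then show ?thesis using spM by simp
    qed
    have ee: "(\<lambda>n. \<integral>x. f n x \<partial>\<mu>) = (\<lambda>n. \<integral>x. f n x \<partial>\<nu>)"
      using bc_integral_eq[OF P S eq fc fb] by auto
    have "(\<lambda>n. \<integral>x. f n x \<partial>\<nu>) \<longlonglongrightarrow> measure \<mu> U" using lim[OF P(1) S(1)] unfolding ee .
    then have "measure \<mu> U = measure \<nu> U" using lim[OF P(2) S(2)] by (rule LIMSEQ_unique)
    then show ?thesis
      using finite_measure.emeasure_eq_measure[OF prob_space.finite_measure[OF P(1)]]
        finite_measure.emeasure_eq_measure[OF prob_space.finite_measure[OF P(2)]] by simp
  qed
  show ?thesis
  proof (rule measure_eqI_generator_eq[where E="Collect open" and \<Omega>=UNIV and A="\<lambda>_. UNIV"])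
    show "Int_stable (Collect open :: (real^'d) set set)" by (auto simp: Int_stable_def)
    show "Collect open \<subseteq> Pow (UNIV :: (real^'d) set)" by auto
    show "\<And>X. X \<in> Collect open \<Longrightarrow> emeasure \<mu> X = emeasure \<nu> X" using openeq by auto
    show "sets \<mu> = sigma_sets UNIV (Collect open)" using S(1) by (simp add: borel_def)
    show "sets \<nu> = sigma_sets UNIV (Collect open)" using S(2) by (simp add: borel_def)
    show "range (\<lambda>_. UNIV) \<subseteq> Collect open" by auto
    show "(\<Union>i::nat. UNIV) = (UNIV :: (real^'d) set)" by auto
    show "\<And>i::nat. emeasure \<mu> UNIV \<noteq> \<infinity>"
      using prob_space.emeasure_space_1[OF P(1)] spmu by simp
  qed
qed

lemma emeasure_wdistr:
  fixes W S :: "'a \<Rightarrow> real"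
  assumes W: "W \<in> borel_measurable M" "integrable M W" "\<And>\<omega>. 0 \<le> W \<omega>"
    and S: "S \<in> borel_measurable M" and A: "A \<in> sets borel"
  shows "emeasure (distr (density M (\<lambda>\<omega>. ennreal (W \<omega>))) borel S) A
       = ennreal (\<integral>\<omega>. W \<omega> * indicator A (S \<omega>) \<partial>M)"
proof -
  have Sd: "S \<in> measurable (density M (\<lambda>\<omega>. ennreal (W \<omega>))) borel" using S by simp
  have "emeasure (distr (density M (\<lambda>\<omega>. ennreal (W \<omega>))) borel S) A
      = emeasure (density M (\<lambda>\<omega>. ennreal (W \<omega>))) (S -` A \<inter> space M)"
    using emeasure_distr[OF Sd A] by simp
  also have "\<dots> = (\<integral>\<^sup>+\<omega>. ennreal (W \<omega>) * indicator (S -` A \<inter> space M) \<omega> \<partial>M)"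
    using S A W by (intro emeasure_density) (auto intro: measurable_sets)
  also have "\<dots> = (\<integral>\<^sup>+\<omega>. ennreal (W \<omega> * indicator A (S \<omega>)) \<partial>M)"
    by (intro nn_integral_cong) (auto simp: indicator_def)
  also have "\<dots> = ennreal (\<integral>\<omega>. W \<omega> * indicator A (S \<omega>) \<partial>M)"
  proof (rule nn_integral_eq_integral)
    show "integrable M (\<lambda>\<omega>. W \<omega> * indicator A (S \<omega>))"
      using W S A by (intro Bochner_Integration.integrable_bound[OF W(2)]) (auto simp: indicator_def)
    show "AE \<omega> in M. 0 \<le> W \<omega> * indicator A (S \<omega>)" using W by auto
  qed
  finally show ?thesis .
qed

lemma integral_wdistr:
  fixes W S :: "'a \<Rightarrow> real" and g :: "real \<Rightarrow> real"
  assumes W: "W \<in> borel_measurable M" "\<And>\<omega>. 0 \<le> W \<omega>"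
    and S: "S \<in> borel_measurable M" and g: "g \<in> borel_measurable borel"
  shows "(\<integral>s. g s \<partial>distr (density M (\<lambda>\<omega>. ennreal (W \<omega>))) borel S)
       = (\<integral>\<omega>. W \<omega> * g (S \<omega>) \<partial>M)"
proof -
  have Sd: "S \<in> measurable (density M (\<lambda>\<omega>. ennreal (W \<omega>))) borel" using S by simp
  have "(\<integral>s. g s \<partial>distr (density M (\<lambda>\<omega>. ennreal (W \<omega>))) borel S)
      = (\<integral>\<omega>. g (S \<omega>) \<partial>density M (\<lambda>\<omega>. ennreal (W \<omega>)))"
    by (rule integral_distr[OF Sd g])
  also have "\<dots> = (\<integral>\<omega>. W \<omega> *\<^sub>R g (S \<omega>) \<partial>M)"
    using W S g by (intro integral_density) auto
  finally show ?thesis by simp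
qed

lemma zero_cond_ext:
  fixes Z S :: "'a \<Rightarrow> real" and g :: "real \<Rightarrow> real"
  assumes Z: "Z \<in> borel_measurable M" "integrable M Z" and S: "S \<in> borel_measurable M"
    and cond: "\<And>c. (\<integral>\<omega>. Z \<omega> * indicator {\<omega>. S \<omega> \<ge> c} \<omega> \<partial>M) = 0"
    and g: "g \<in> borel_measurable borel" "\<And>s. \<bar>g s\<bar> \<le> K"
  shows "(\<integral>\<omega>. Z \<omega> * g (S \<omega>) \<partial>M) = 0"
proof -
  define W1 where "W1 \<omega> = max 0 (Z \<omega>)" for \<omega>
  define W2 where "W2 \<omega> = max 0 (- Z \<omega>)" for \<omega>
  have W1: "W1 \<in> borel_measurable M" "integrable M W1" "\<And>\<omega>. 0 \<le> W1 \<omega>"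
    using Z unfolding W1_def by auto
  have W2: "W2 \<in> borel_measurable M" "integrable M W2" "\<And>\<omega>. 0 \<le> W2 \<omega>"
    using Z unfolding W2_def by auto
  have ZW: "Z \<omega> = W1 \<omega> - W2 \<omega>" for \<omega> unfolding W1_def W2_def by auto
  define N1 where "N1 = distr (density M (\<lambda>\<omega>. ennreal (W1 \<omega>))) borel S"
  define N2 where "N2 = distr (density M (\<lambda>\<omega>. ennreal (W2 \<omega>))) borel S"
  have ind: "integrable M (\<lambda>\<omega>. W \<omega> * indicator A (S \<omega>))" if "integrable M W" "W \<in> borel_measurable M" "A \<in> sets borel" for W :: "'a \<Rightarrow> real" and A
    using that S by (intro Bochner_Integration.integrable_bound[OF that(1)]) (auto simp: indicator_def)
  have eqc: "emeasure N1 {c..} = emeasure N2 {c..}" for c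
  proof -
    have "(\<integral>\<omega>. W1 \<omega> * indicator {c..} (S \<omega>) \<partial>M) - (\<integral>\<omega>. W2 \<omega> * indicator {c..} (S \<omega>) \<partial>M)
        = (\<integral>\<omega>. Z \<omega> * indicator {\<omega>. S \<omega> \<ge> c} \<omega> \<partial>M)"
      using ind[OF W1(2,1), of "{c..}"] ind[OF W2(2,1), of "{c..}"]
      by (subst Bochner_Integration.integral_diff[symmetric]) (auto simp: ZW indicator_def algebra_simps)
    then show ?thesis
      unfolding N1_def N2_def using cond[of c]
      by (simp add: emeasure_wdistr[OF W1 S] emeasure_wdistr[OF W2 S])
  qed
  have "N1 = N2"
  proof (rule measure_eqI_generator_eq[where E="range atLeast" and \<Omega>=UNIV and A="\<lambda>i. {- real i..}"])
    show "Int_stable (range atLeast :: real set set)"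
      unfolding Int_stable_def
    proof safe
      fix a b :: real show "{a..} \<inter> {b..} \<in> range atLeast"
        by (rule image_eqI[of _ _ "max a b"]) auto
    qed
    show "range atLeast \<subseteq> Pow (UNIV :: real set)" by auto
    show "\<And>X. X \<in> range atLeast \<Longrightarrow> emeasure N1 X = emeasure N2 X" using eqc by auto
    show "sets N1 = sigma_sets UNIV (range atLeast)" unfolding N1_def
      by (simp add: borel_Ici)
    show "sets N2 = sigma_sets UNIV (range atLeast)" unfolding N2_def
      by (simp add: borel_Ici)
    show "range (\<lambda>i. {- real i..}) \<subseteq> range atLeast" by auto
    show "(\<Union>i. {- real i..}) = (UNIV :: real set)"
    proof -
      have "x \<in> {- real (nat \<lceil>-x\<rceil>)..}" for x :: real by simp linarith
      then show ?thesis by blast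
    qed
    show "\<And>i. emeasure N1 {- real i..} \<noteq> \<infinity>"
      unfolding N1_def by (simp add: emeasure_wdistr[OF W1 S])
  qed
  then have "(\<integral>s. g s \<partial>N1) = (\<integral>s. g s \<partial>N2)" by simp
  then have "(\<integral>\<omega>. W1 \<omega> * g (S \<omega>) \<partial>M) = (\<integral>\<omega>. W2 \<omega> * g (S \<omega>) \<partial>M)"
    unfolding N1_def N2_def integral_wdistr[OF W1(1,3) S g(1)] integral_wdistr[OF W2(1,3) S g(1)] .
  moreover have i1: "integrable M (\<lambda>\<omega>. W \<omega> * g (S \<omega>))" if "integrable M W" "W \<in> borel_measurable M" for W :: "'a \<Rightarrow> real"
  proof (rule Bochner_Integration.integrable_bound[where f="\<lambda>\<omega>. \<bar>K\<bar> * W \<omega>"])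
    show "integrable M (\<lambda>\<omega>. \<bar>K\<bar> * W \<omega>)" using that by simp
    show "(\<lambda>\<omega>. W \<omega> * g (S \<omega>)) \<in> borel_measurable M" using that S g by measurable
    show "AE \<omega> in M. norm (W \<omega> * g (S \<omega>)) \<le> norm (\<bar>K\<bar> * W \<omega>)"
    proof (rule AE_I2)
      fix \<omega>
      have "\<bar>g (S \<omega>)\<bar> \<le> \<bar>K\<bar>" using g(2)[of "S \<omega>"] by linarith
      then have "\<bar>W \<omega>\<bar> * \<bar>g (S \<omega>)\<bar> \<le> \<bar>W \<omega>\<bar> * \<bar>K\<bar>" by (intro mult_left_mono) auto
      then show "norm (W \<omega> * g (S \<omega>)) \<le> norm (\<bar>K\<bar> * W \<omega>)" by (simp add: abs_mult mult.commute)
    qed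
  qed
  ultimately show ?thesis
    using i1[OF W1(2,1)] i1[OF W2(2,1)]
    by (simp add: ZW left_diff_distrib)
qed

lemma mvt_bound:
  fixes g g' :: "real \<Rightarrow> real"
  assumes d: "\<And>t. (g has_real_derivative g' t) (at t)" and b: "\<And>t. \<bar>g' t\<bar> \<le> B"
  shows "\<bar>g y - g x\<bar> \<le> B * \<bar>y - x\<bar>"
proof -
  have *: "\<bar>g b - g a\<bar> \<le> B * \<bar>b - a\<bar>" if ab: "a < b" for a b
  proof -
    obtain z where "g b - g a = (b - a) * g' z" using MVT2[of a b g g'] ab d by blast
    then have "\<bar>g b - g a\<bar> = \<bar>b - a\<bar> * \<bar>g' z\<bar>" by (simp add: abs_mult)
    also have "\<dots> \<le> \<bar>b - a\<bar> * B" by (intro mult_left_mono b) auto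
    finally show ?thesis by (simp add: mult.commute)
  qed
  consider "x < y" | "x = y" | "y < x" by linarith
  then show ?thesis
  proof cases
    case 1 then show ?thesis using * by blast
  next
    case 2 then show ?thesis by simp
  next
    case 3 then show ?thesis using *[OF 3] by (simp add: abs_minus_commute)
  qed
qed

lemma deriv_int:
  fixes f f' :: "real \<Rightarrow> 'a \<Rightarrow> real"
  assumes meas: "\<And>t. f t \<in> borel_measurable M" and meas': "\<And>t. f' t \<in> borel_measurable M"
    and int: "\<And>t. integrable M (f t)"
    and der: "\<And>t \<omega>. ((\<lambda>t. f t \<omega>) has_real_derivative f' t \<omega>) (at t)"
    and bnd: "\<And>t \<omega>. \<bar>f' t \<omega>\<bar> \<le> G \<omega>" and G: "integrable M G"
  shows "((\<lambda>t. \<integral>\<omega>. f t \<omega> \<partial>M) has_real_derivative (\<integral>\<omega>. f' \<theta> \<omega> \<partial>M)) (at \<theta>)"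
  unfolding DERIV_def tendsto_at_iff_sequentially comp_def
proof (intro allI impI)
  fix X :: "nat \<Rightarrow> real" assume X: "\<forall>i. X i \<in> UNIV - {0}" "X \<longlonglongrightarrow> 0"
  define q where "q i \<omega> = (f (\<theta> + X i) \<omega> - f \<theta> \<omega>) / X i" for i \<omega>
  have qeq: "((\<integral>\<omega>. f (\<theta> + X i) \<omega> \<partial>M) - (\<integral>\<omega>. f \<theta> \<omega> \<partial>M)) / X i = (\<integral>\<omega>. q i \<omega> \<partial>M)" for i
    unfolding q_def using int by (simp add: Bochner_Integration.integral_diff)
  have "(\<lambda>i. \<integral>\<omega>. q i \<omega> \<partial>M) \<longlonglongrightarrow> (\<integral>\<omega>. f' \<theta> \<omega> \<partial>M)"
  proof (rule integral_dominated_convergence[where w=G])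
    show "f' \<theta> \<in> borel_measurable M" by (rule meas')
    show "\<And>i. q i \<in> borel_measurable M" unfolding q_def using meas by measurable
    show "integrable M G" by (rule G)
    show "AE \<omega> in M. (\<lambda>i. q i \<omega>) \<longlonglongrightarrow> f' \<theta> \<omega>"
    proof (rule AE_I2)
      fix \<omega>
      have "(\<lambda>h. (f (\<theta> + h) \<omega> - f \<theta> \<omega>) / h) \<midarrow>0\<rightarrow> f' \<theta> \<omega>" using der[of \<omega> \<theta>] by (simp add: DERIV_def)
      then show "(\<lambda>i. q i \<omega>) \<longlonglongrightarrow> f' \<theta> \<omega>"
        unfolding tendsto_at_iff_sequentially comp_def q_def using X by blast
    qed
    show "\<And>i. AE \<omega> in M. norm (q i \<omega>) \<le> G \<omega>"
    proof (intro AE_I2)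
      fix i \<omega>
      have "\<bar>f (\<theta> + X i) \<omega> - f \<theta> \<omega>\<bar> \<le> G \<omega> * \<bar>(\<theta> + X i) - \<theta>\<bar>"
        by (rule mvt_bound[OF der bnd])
      then show "norm (q i \<omega>) \<le> G \<omega>" using X(1) unfolding q_def
        by (simp add: abs_divide divide_le_eq)
    qed
  qed
  then show "(\<lambda>i. ((\<integral>\<omega>. f (\<theta> + X i) \<omega> \<partial>M) - (\<integral>\<omega>. f \<theta> \<omega> \<partial>M)) / X i) \<longlonglongrightarrow> (\<integral>\<omega>. f' \<theta> \<omega> \<partial>M)"
    unfolding qeq .
qed

context
  fixes M :: "'a measure" and X :: "'a \<Rightarrow> real^'d"
  assumes P: "prob_space M" and Xm: "X \<in> borel_measurable M" and Xi: "integrable M (\<lambda>\<omega>. norm (X \<omega>))"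
  and H: "\<forall>(c::real) (u::real^'d) (v::real^'d). norm u = 1 \<longrightarrow> norm v = 1 \<longrightarrow>
       (\<integral>\<omega>. ((v - (v \<bullet> u) *\<^sub>R u) \<bullet> X \<omega>) * indicator {\<omega>. u \<bullet> X \<omega> \<ge> c} \<omega> \<partial>M) = 0"
begin

lemma lin_meas: "(\<lambda>\<omega>. w \<bullet> X \<omega>) \<in> borel_measurable M"
  using Xm by measurable

lemma lin_int: "integrable M (\<lambda>\<omega>. w \<bullet> X \<omega>)"
proof (rule Bochner_Integration.integrable_bound[where f="\<lambda>\<omega>. norm w * norm (X \<omega>)"])
  show "integrable M (\<lambda>\<omega>. norm w * norm (X \<omega>))" using Xi by simp
  show "(\<lambda>\<omega>. w \<bullet> X \<omega>) \<in> borel_measurable M" by (rule lin_meas)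
  show "AE \<omega> in M. norm (w \<bullet> X \<omega>) \<le> norm (norm w * norm (X \<omega>))"
    by (auto intro!: AE_I2 simp: Cauchy_Schwarz_ineq2)
qed

lemma cond_perp:
  assumes u: "norm u = 1" and wu: "w \<bullet> u = 0"
  shows "(\<integral>\<omega>. (w \<bullet> X \<omega>) * indicator {\<omega>. u \<bullet> X \<omega> \<ge> c} \<omega> \<partial>M) = 0"
proof (cases "w = 0")
  case True then show ?thesis by simp
next
  case False
  define v where "v = (1 / norm w) *\<^sub>R w"
  have v: "norm v = 1" using False by (simp add: v_def)
  have "v \<bullet> u = 0" using wu by (simp add: v_def)
  then have "(\<integral>\<omega>. (v \<bullet> X \<omega>) * indicator {\<omega>. u \<bullet> X \<omega> \<ge> c} \<omega> \<partial>M) = 0"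
    using H u v by force
  moreover have wX: "w \<bullet> x = norm w * (v \<bullet> x)" for x using False by (simp add: v_def)
  then have "(\<lambda>\<omega>. (w \<bullet> X \<omega>) * indicator {\<omega>. u \<bullet> X \<omega> \<ge> c} \<omega>)
      = (\<lambda>\<omega>. norm w * ((v \<bullet> X \<omega>) * indicator {\<omega>. u \<bullet> X \<omega> \<ge> c} \<omega>))"
    by (simp add: mult.assoc)
  ultimately show ?thesis by simp
qed

lemma cond_sin:
  assumes u: "norm u = 1" and wu: "w \<bullet> u = 0"
  shows "(\<integral>\<omega>. (w \<bullet> X \<omega>) * sin (r * (u \<bullet> X \<omega>) + b) \<partial>M) = 0"
proof (rule zero_cond_ext[where Z="\<lambda>\<omega>. w \<bullet> X \<omega>" and S="\<lambda>\<omega>. u \<bullet> X \<omega>" and g="\<lambda>s. sin (r * s + b)" and K=1])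
  show "(\<lambda>\<omega>. w \<bullet> X \<omega>) \<in> borel_measurable M" by (rule lin_meas)
  show "integrable M (\<lambda>\<omega>. w \<bullet> X \<omega>)" by (rule lin_int)
  show "(\<lambda>\<omega>. u \<bullet> X \<omega>) \<in> borel_measurable M" by (rule lin_meas)
  show "\<And>c. (\<integral>\<omega>. (w \<bullet> X \<omega>) * indicator {\<omega>. u \<bullet> X \<omega> \<ge> c} \<omega> \<partial>M) = 0"
    using cond_perp[OF u wu] .
  show "(\<lambda>s. sin (r * s + b)) \<in> borel_measurable borel" by measurable
  show "\<And>s. \<bar>sin (r * s + b)\<bar> \<le> 1" by simp
qed

lemma circle_const:
  assumes e1: "norm e1 = 1" and e2: "norm e2 = 1" and e12: "e1 \<bullet> e2 = 0"
  shows "(\<integral>\<omega>. cos (r * cos \<theta>0 * (e1 \<bullet> X \<omega>) + r * sin \<theta>0 * (e2 \<bullet> X \<omega>) + b) \<partial>M)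
       = (\<integral>\<omega>. cos (r * (e1 \<bullet> X \<omega>) + b) \<partial>M)"
proof -
  interpret prob_space M by (rule P)
  define f where "f \<theta> \<omega> = cos (r * cos \<theta> * (e1 \<bullet> X \<omega>) + r * sin \<theta> * (e2 \<bullet> X \<omega>) + b)" for \<theta> \<omega>
  define f' where "f' \<theta> \<omega> = - sin (r * cos \<theta> * (e1 \<bullet> X \<omega>) + r * sin \<theta> * (e2 \<bullet> X \<omega>) + b)
      * (- r * sin \<theta> * (e1 \<bullet> X \<omega>) + r * cos \<theta> * (e2 \<bullet> X \<omega>))" for \<theta> \<omega>
  define G where "G \<omega> = 2 * \<bar>r\<bar> * norm (X \<omega>)" for \<omega>
  have fm: "f \<theta> \<in> borel_measurable M" for \<theta> unfolding f_def using Xm by measurable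
  have f'm: "f' \<theta> \<in> borel_measurable M" for \<theta> unfolding f'_def using Xm by measurable
  have fi: "integrable M (f \<theta>)" for \<theta>
    using fm by (intro integrable_const_bound[where B=1]) (auto simp: f_def)
  have der: "((\<lambda>\<theta>. f \<theta> \<omega>) has_real_derivative f' \<theta> \<omega>) (at \<theta>)" for \<theta> \<omega>
    unfolding f_def f'_def by (auto intro!: derivative_eq_intros simp: algebra_simps)
  have bnd: "\<bar>f' \<theta> \<omega>\<bar> \<le> G \<omega>" for \<theta> \<omega>
  proof -
    have A: "\<bar>e1 \<bullet> X \<omega>\<bar> \<le> norm (X \<omega>)" "\<bar>e2 \<bullet> X \<omega>\<bar> \<le> norm (X \<omega>)"
      using Cauchy_Schwarz_ineq2[of e1 "X \<omega>"] Cauchy_Schwarz_ineq2[of e2 "X \<omega>"] e1 e2 by auto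
    have "\<bar>- r * sin \<theta> * (e1 \<bullet> X \<omega>) + r * cos \<theta> * (e2 \<bullet> X \<omega>)\<bar>
        \<le> \<bar>r\<bar> * \<bar>sin \<theta>\<bar> * \<bar>e1 \<bullet> X \<omega>\<bar> + \<bar>r\<bar> * \<bar>cos \<theta>\<bar> * \<bar>e2 \<bullet> X \<omega>\<bar>"
    proof -
      have t1: "\<bar>- r * sin \<theta> * (e1 \<bullet> X \<omega>)\<bar> = \<bar>r\<bar> * \<bar>sin \<theta>\<bar> * \<bar>e1 \<bullet> X \<omega>\<bar>" by (simp add: abs_mult)
      have t2: "\<bar>r * cos \<theta> * (e2 \<bullet> X \<omega>)\<bar> = \<bar>r\<bar> * \<bar>cos \<theta>\<bar> * \<bar>e2 \<bullet> X \<omega>\<bar>" by (simp add: abs_mult)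
      show ?thesis using abs_triangle_ineq[of "- r * sin \<theta> * (e1 \<bullet> X \<omega>)" "r * cos \<theta> * (e2 \<bullet> X \<omega>)"] t1 t2 by simp
    qed
    also have "\<dots> \<le> \<bar>r\<bar> * 1 * norm (X \<omega>) + \<bar>r\<bar> * 1 * norm (X \<omega>)"
      using A by (intro add_mono mult_mono) auto
    finally have "\<bar>- r * sin \<theta> * (e1 \<bullet> X \<omega>) + r * cos \<theta> * (e2 \<bullet> X \<omega>)\<bar> \<le> G \<omega>"
      by (simp add: G_def)
    moreover have "\<bar>sin (r * cos \<theta> * (e1 \<bullet> X \<omega>) + r * sin \<theta> * (e2 \<bullet> X \<omega>) + b)\<bar> \<le> 1" by simp
    ultimately have "\<bar>sin (r * cos \<theta> * (e1 \<bullet> X \<omega>) + r * sin \<theta> * (e2 \<bullet> X \<omega>) + b)\<bar>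
       * \<bar>- r * sin \<theta> * (e1 \<bullet> X \<omega>) + r * cos \<theta> * (e2 \<bullet> X \<omega>)\<bar> \<le> 1 * G \<omega>"
      by (intro mult_mono) auto
    then show ?thesis unfolding f'_def abs_mult abs_minus_cancel by simp
  qed
  have Gi: "integrable M G" unfolding G_def[abs_def] using Xi by (simp add: mult.assoc)
  have D: "((\<lambda>\<theta>. \<integral>\<omega>. f \<theta> \<omega> \<partial>M) has_real_derivative (\<integral>\<omega>. f' \<theta> \<omega> \<partial>M)) (at \<theta>)" for \<theta>
    by (rule deriv_int[OF fm f'm fi der bnd Gi])
  have Z: "(\<integral>\<omega>. f' \<theta> \<omega> \<partial>M) = 0" for \<theta>
  proof -
    define u where "u = cos \<theta> *\<^sub>R e1 + sin \<theta> *\<^sub>R e2"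
    define w where "w = (- r * sin \<theta>) *\<^sub>R e1 + (r * cos \<theta>) *\<^sub>R e2"
    have ee: "e1 \<bullet> e1 = 1" "e2 \<bullet> e2 = 1" "e2 \<bullet> e1 = 0"
      using e1 e2 e12 by (auto simp: inner_commute dot_square_norm)
    have "norm u ^ 2 = 1"
      unfolding power2_norm_eq_inner u_def
      by (simp add: inner_add_left inner_add_right ee e12 algebra_simps flip: power2_eq_square)
    then have u: "norm u = 1" using norm_ge_zero[of u] by (auto simp: power2_eq_1_iff)
    have wu: "w \<bullet> u = 0"
      unfolding u_def w_def by (simp add: inner_add_left inner_add_right ee e12 algebra_simps)
    have "f' \<theta> \<omega> = - ((w \<bullet> X \<omega>) * sin (r * (u \<bullet> X \<omega>) + b))" for \<omega>
      unfolding f'_def u_def w_def by (simp add: inner_add_left algebra_simps)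
    then show ?thesis using cond_sin[OF u wu, of r b] by simp
  qed
  have "(\<lambda>\<theta>. \<integral>\<omega>. f \<theta> \<omega> \<partial>M) \<theta>0 = (\<lambda>\<theta>. \<integral>\<omega>. f \<theta> \<omega> \<partial>M) 0"
    by (rule DERIV_isconst_all) (use D Z in auto)
  then show ?thesis by (simp add: f_def)
qed

end

context
  fixes M :: "'a measure" and X :: "'a \<Rightarrow> real^'d"
  assumes P: "prob_space M" and Xm: "X \<in> borel_measurable M" and Xi: "integrable M (\<lambda>\<omega>. norm (X \<omega>))"
  and H: "\<forall>(c::real) (u::real^'d) (v::real^'d). norm u = 1 \<longrightarrow> norm v = 1 \<longrightarrow>
       (\<integral>\<omega>. ((v - (v \<bullet> u) *\<^sub>R u) \<bullet> X \<omega>) * indicator {\<omega>. u \<bullet> X \<omega> \<ge> c} \<omega> \<partial>M) = 0"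
  and D2: "CARD('d) \<ge> 2"
begin

lemma sphere_inv:
  assumes st: "norm s = norm t"
  shows "(\<integral>\<omega>. cos (s \<bullet> X \<omega> + b) \<partial>M) = (\<integral>\<omega>. cos (t \<bullet> X \<omega> + b) \<partial>M)"
proof (cases "t = 0")
  case True then show ?thesis using st by simp
next
  case False
  define r where "r = norm t"
  have r: "r > 0" using False by (simp add: r_def)
  define e1 where "e1 = (1/r) *\<^sub>R t"
  have e1: "norm e1 = 1" using r by (simp add: e1_def r_def)
  have te1: "t = r *\<^sub>R e1" using r by (simp add: e1_def)
  have ee1: "e1 \<bullet> e1 = 1" using e1 by (simp add: dot_square_norm)
  obtain e2 where e2: "norm e2 = 1" "e1 \<bullet> e2 = 0" "s = (s \<bullet> e1) *\<^sub>R e1 + (s \<bullet> e2) *\<^sub>R e2"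
  proof (cases "s - (s \<bullet> e1) *\<^sub>R e1 = 0")
    case True
    obtain y :: "real^'d" where y: "y \<noteq> 0" "orthogonal e1 y"
      using orthogonal_to_vector_exists[of e1] D2 by auto
    define e2 where "e2 = (1 / norm y) *\<^sub>R y"
    have "norm e2 = 1" using y by (simp add: e2_def)
    moreover have "e1 \<bullet> e2 = 0" using y by (simp add: e2_def orthogonal_def)
    moreover have "s \<bullet> e2 = 0"
    proof -
      have "s = (s \<bullet> e1) *\<^sub>R e1" using True by simp
      then have "s \<bullet> e2 = ((s \<bullet> e1) *\<^sub>R e1) \<bullet> e2" by simp
      then have "s \<bullet> e2 = (s \<bullet> e1) * (e1 \<bullet> e2)" by simp
      then show ?thesis using \<open>e1 \<bullet> e2 = 0\<close> by simp
    qed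
    moreover have "s = (s \<bullet> e1) *\<^sub>R e1 + (s \<bullet> e2) *\<^sub>R e2" using True \<open>s \<bullet> e2 = 0\<close> by simp
    ultimately show ?thesis using that by blast
  next
    case False
    define p where "p = s - (s \<bullet> e1) *\<^sub>R e1"
    have p0: "p \<noteq> 0" using False by (simp add: p_def)
    have pe1: "e1 \<bullet> p = 0" unfolding p_def using ee1 by (simp add: inner_diff_right inner_commute)
    have sp: "s \<bullet> p = p \<bullet> p"
    proof -
      have "s = p + (s \<bullet> e1) *\<^sub>R e1" by (simp add: p_def)
      then have "s \<bullet> p = (p + (s \<bullet> e1) *\<^sub>R e1) \<bullet> p" by simp
      then have "s \<bullet> p = p \<bullet> p + (s \<bullet> e1) * (e1 \<bullet> p)" by (simp add: inner_add_left)
      then show ?thesis using pe1 by simp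
    qed
    define e2 where "e2 = (1 / norm p) *\<^sub>R p"
    have "norm e2 = 1" using p0 by (simp add: e2_def)
    moreover have "e1 \<bullet> e2 = 0" using pe1 by (simp add: e2_def)
    moreover have "(s \<bullet> e2) *\<^sub>R e2 = p"
    proof -
      have "(s \<bullet> e2) *\<^sub>R e2 = ((s \<bullet> p) / (norm p * norm p)) *\<^sub>R p" by (simp add: e2_def)
      also have "\<dots> = p" using sp p0 by (simp add: dot_square_norm power2_eq_square)
      finally show ?thesis .
    qed
    moreover have "s = (s \<bullet> e1) *\<^sub>R e1 + (s \<bullet> e2) *\<^sub>R e2"
      using \<open>(s \<bullet> e2) *\<^sub>R e2 = p\<close> by (simp add: p_def)
    ultimately show ?thesis using that by blast
  qed
  define a where "a = s \<bullet> e1"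
  define c where "c = s \<bullet> e2"
  have ee2: "e2 \<bullet> e2 = 1" "e2 \<bullet> e1 = 0" using e2 by (auto simp: dot_square_norm inner_commute)
  have sdec: "s = a *\<^sub>R e1 + c *\<^sub>R e2" using e2(3) by (simp add: a_def c_def)
  have "s \<bullet> s = (a *\<^sub>R e1 + c *\<^sub>R e2) \<bullet> (a *\<^sub>R e1 + c *\<^sub>R e2)" using sdec by simp
  also have "\<dots> = a * a + c * c"
    using ee1 ee2 e2(2) by (simp add: inner_add_left inner_add_right)
  finally have "s \<bullet> s = a * a + c * c" .
  moreover have "s \<bullet> s = r * r" using st by (simp add: r_def dot_square_norm power2_eq_square)
  ultimately have rr: "a * a + c * c = r * r" by simp
  have "(a/r)^2 + (c/r)^2 = (a*a + c*c)/(r*r)" by (simp add: power2_eq_square add_divide_distrib)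
  also have "\<dots> = 1" using rr r by simp
  finally have "(a/r)^2 + (c/r)^2 = 1" .
  then obtain \<theta> where th: "a/r = cos \<theta>" "c/r = sin \<theta>" by (rule sincos_total_2pi)
  have sX: "s \<bullet> x = r * cos \<theta> * (e1 \<bullet> x) + r * sin \<theta> * (e2 \<bullet> x)" for x
  proof -
    have "s \<bullet> x = (a *\<^sub>R e1 + c *\<^sub>R e2) \<bullet> x" using sdec by simp
    then have "s \<bullet> x = a * (e1 \<bullet> x) + c * (e2 \<bullet> x)" by (simp add: inner_add_left)
    moreover have "a = r * cos \<theta>" "c = r * sin \<theta>" using th r by (auto simp: field_simps)
    ultimately show ?thesis by simp
  qed
  have tX: "t \<bullet> x = r * (e1 \<bullet> x)" for x using te1 by simp
  show ?thesis unfolding sX tX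
    by (rule circle_const[OF P Xm Xi H e1 e2(1,2)])
qed

end

lemma orth_norm:
  fixes \<Gamma> :: "real^'d^'d"
  assumes "orthogonal_matrix \<Gamma>" shows "norm (\<Gamma> *v x) = norm x"
proof -
  have "orthogonal_transformation (\<lambda>x. \<Gamma> *v x)"
    unfolding orthogonal_transformation_matrix
    using assms by (simp add: matrix_vector_mul_linear matrix_of_matrix_vector_mul)
  then show ?thesis by (rule orthogonal_transformation_norm)
qed

lemma reverse_dir:
  fixes M :: "'a measure" and X :: "'a \<Rightarrow> real^'d"
  assumes P: "prob_space M" and D2: "CARD('d) \<ge> 2" and Xm: "X \<in> borel_measurable M"
    and Xi: "integrable M (\<lambda>\<omega>. norm (X \<omega>))"
    and H: "\<forall>(c::real) (u::real^'d) (v::real^'d). norm u = 1 \<longrightarrow> norm v = 1 \<longrightarrow>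
       (\<integral>\<omega>. ((v - (v \<bullet> u) *\<^sub>R u) \<bullet> X \<omega>) * indicator {\<omega>. u \<bullet> X \<omega> \<ge> c} \<omega> \<partial>M) = 0"
  shows "spherically_symmetric M X"
  unfolding spherically_symmetric_def
proof (intro allI impI)
  fix \<Gamma> :: "real^'d^'d" assume G: "orthogonal_matrix \<Gamma>"
  have GXm: "(\<lambda>\<omega>. \<Gamma> *v X \<omega>) \<in> borel_measurable M"
  proof -
    have "(\<lambda>x. \<Gamma> *v x) \<in> borel_measurable borel"
      by (intro borel_measurable_continuous_onI linear_continuous_on matrix_vector_mul_bounded_linear)
    then show ?thesis using Xm by (rule measurable_compose[rotated])
  qed
  show "distr M borel (\<lambda>\<omega>. \<Gamma> *v X \<omega>) = distr M borel X"
  proof (rule measure_eq_trig)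
    show "prob_space (distr M borel (\<lambda>\<omega>. \<Gamma> *v X \<omega>))" using P GXm by (rule prob_space.prob_space_distr)
    show "prob_space (distr M borel X)" using P Xm by (rule prob_space.prob_space_distr)
    show "sets (distr M borel (\<lambda>\<omega>. \<Gamma> *v X \<omega>)) = sets borel" by simp
    show "sets (distr M borel X) = sets borel" by simp
    fix t :: "real^'d" and b :: real
    have cm: "(\<lambda>x::real^'d. cos (t \<bullet> x + b)) \<in> borel_measurable borel" by measurable
    have "(\<integral>x. cos (t \<bullet> x + b) \<partial>distr M borel (\<lambda>\<omega>. \<Gamma> *v X \<omega>)) = (\<integral>\<omega>. cos (t \<bullet> (\<Gamma> *v X \<omega>) + b) \<partial>M)"
      by (rule integral_distr[OF GXm cm])
    also have "\<dots> = (\<integral>\<omega>. cos ((transpose \<Gamma> *v t) \<bullet> X \<omega> + b) \<partial>M)"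
      by (simp add: transpose_matrix_vector dot_lmul_matrix)
    also have "\<dots> = (\<integral>\<omega>. cos (t \<bullet> X \<omega> + b) \<partial>M)"
    proof (rule sphere_inv[OF P Xm Xi H D2])
      show "norm (transpose \<Gamma> *v t) = norm t"
        using G by (intro orth_norm) (simp add: orthogonal_matrix_transpose)
    qed
    also have "\<dots> = (\<integral>x. cos (t \<bullet> x + b) \<partial>distr M borel X)"
      by (rule integral_distr[OF Xm cm, symmetric])
    finally show "(\<integral>x. cos (t \<bullet> x + b) \<partial>distr M borel (\<lambda>\<omega>. \<Gamma> *v X \<omega>)) = (\<integral>x. cos (t \<bullet> x + b) \<partial>distr M borel X)" .
  qed
qed

lemma forward_dir:
  fixes M :: "'a measure" and X :: "'a \<Rightarrow> real^'d"
  assumes P: "prob_space M" and Xm: "X \<in> borel_measurable M"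
    and S: "spherically_symmetric M X" and u: "norm u = 1"
  shows "(\<integral>\<omega>. ((v - (v \<bullet> u) *\<^sub>R u) \<bullet> X \<omega>) * indicator {\<omega>. u \<bullet> X \<omega> \<ge> c} \<omega> \<partial>M) = 0"
proof -
  define w where "w = v - (v \<bullet> u) *\<^sub>R u"
  have uu: "u \<bullet> u = 1" using u by (simp add: dot_square_norm)
  have wu: "w \<bullet> u = 0" "u \<bullet> w = 0" using uu by (auto simp: w_def inner_diff_left inner_diff_right inner_commute)
  show ?thesis
  proof (cases "w = 0")
    case True then show ?thesis by (simp add: w_def[symmetric])
  next
    case False
    have ww: "w \<bullet> w \<noteq> 0" using False by simp
    define h where "h x = x - (2 * (w \<bullet> x) / (w \<bullet> w)) *\<^sub>R w" for x :: "real^'d"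
    have lin: "linear h"
    proof (rule linearI)
      fix x y :: "real^'d"
      show "h (x + y) = h x + h y"
        unfolding h_def by (simp add: inner_add_right add_divide_distrib distrib_left scaleR_add_left algebra_simps)
    next
      fix k :: real and x :: "real^'d"
      show "h (k *\<^sub>R x) = k *\<^sub>R h x"
        unfolding h_def by (simp add: scaleR_right_diff_distrib)
    qed
    have hn: "norm (h x) = norm x" for x
    proof -
      have "h x \<bullet> h x = x \<bullet> x"
        using ww unfolding h_def
        by (simp add: inner_diff_left inner_diff_right inner_commute field_simps power2_eq_square)
      then show ?thesis by (simp add: norm_eq_sqrt_inner)
    qed
    define \<Gamma> where "\<Gamma> = matrix h"
    have Gh: "\<Gamma> *v x = h x" for x unfolding \<Gamma>_def using lin by (simp add: matrix_works linear_matrix_vector_mul_eq)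
    have "orthogonal_transformation h" using lin hn by (simp add: orthogonal_transformation)
    then have G: "orthogonal_matrix \<Gamma>" unfolding \<Gamma>_def orthogonal_transformation_matrix by simp
    have eq: "distr M borel (\<lambda>\<omega>. \<Gamma> *v X \<omega>) = distr M borel X" using S G unfolding spherically_symmetric_def by blast
    define F where "F x = (w \<bullet> x) * indicator {y. u \<bullet> y \<ge> c} x" for x :: "real^'d"
    have Fm: "F \<in> borel_measurable borel" unfolding F_def[abs_def] by measurable
    have hm: "h \<in> borel_measurable borel"
      using lin by (intro borel_measurable_continuous_onI linear_continuous_on) (simp add: linear_conv_bounded_linear)
    have hXm: "(\<lambda>\<omega>. \<Gamma> *v X \<omega>) \<in> borel_measurable M" unfolding Gh using Xm hm by (rule measurable_compose)
    have Fh: "F (h x) = - F x" for x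
    proof -
      have "w \<bullet> h x = - (w \<bullet> x)" using ww unfolding h_def by (simp add: inner_diff_right)
      moreover have "u \<bullet> h x = u \<bullet> x" unfolding h_def using wu by (simp add: inner_diff_right)
      ultimately show ?thesis unfolding F_def by (simp add: indicator_def)
    qed
    have "(\<integral>\<omega>. F (X \<omega>) \<partial>M) = (\<integral>x. F x \<partial>distr M borel X)" by (rule integral_distr[OF Xm Fm, symmetric])
    also have "\<dots> = (\<integral>x. F x \<partial>distr M borel (\<lambda>\<omega>. \<Gamma> *v X \<omega>))" by (simp add: eq)
    also have "\<dots> = (\<integral>\<omega>. F (\<Gamma> *v X \<omega>) \<partial>M)" by (rule integral_distr[OF hXm Fm])
    also have "\<dots> = - (\<integral>\<omega>. F (X \<omega>) \<partial>M)" by (simp add: Gh Fh)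
    finally have "(\<integral>\<omega>. F (X \<omega>) \<partial>M) = 0" by simp
    then show ?thesis unfolding F_def w_def by (simp add: indicator_def)
  qed
qed

theorem lemma2p1:
  fixes M :: "'a measure" and X :: "'a \<Rightarrow> real^'d"
  assumes "prob_space M"
    and "CARD('d) \<ge> 2"
    and "X \<in> borel_measurable M"
    and "integrable M (\<lambda>\<omega>. norm (X \<omega>))"
  shows "spherically_symmetric M X \<longleftrightarrow>
    (\<forall>(c::real) (u::real^'d) (v::real^'d). norm u = 1 \<longrightarrow> norm v = 1 \<longrightarrow>
       (\<integral>\<omega>. ((v - (v \<bullet> u) *\<^sub>R u) \<bullet> X \<omega>) * indicator {\<omega>. u \<bullet> X \<omega> \<ge> c} \<omega> \<partial>M) = 0)"
  using forward_dir[OF assms(1,3)] reverse_dir[OF assms(1,2,3,4)] by blast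

end
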